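(* Let $(i,j,t,u,v)$ be an arbitrary permutation of $(1,2,3,4,5)$. The monomials $x_i^2x_jx_t^3x_u^3x_v^3$ with $i<j$, and $x_i^3x_j^4x_t^3x_u^7x_v^7$ with $i<j<t$, are strictly inadmissible in $P_5$.
   Context: $P_k=\mathbb F_2[x_1,\dots,x_k]$, $\deg x_i=1$, with the standard action of the mod-2 Steenrod algebra $\mathcal A$. $\mathcal A_s$ is the sub-Hopf algebra generated by $Sq^i$, $0\le i\le2^s$, and $\mathcal A_s^+=\mathcal A^+\cap\mathcal A_s$. For a monomial $x$, $\nu_j(x)$ is the exponent of $x_j$, $\alpha_i(a)$ the $i$-th binary digit of $a$, $\omega(x)=(\omega_i(x))$ with $\omega_i(x)=\sum_j\alpha_{i-1}(\nu_j(x))$, $\sigma(x)=(\nu_1(x),\dots,\nu_k(x))$, both ordered left-lexicographically; for monomials of equal degree $u<v$ iff $\omega(u)<\omega(v)$, or $\omega(u)=\omega(v)$ and $\sigma(u)<\sigma(v)$. A monomial $u$ is strictly inadmissible if there exist monomials $v_1,\dots,v_r<u$ with $u+\sum_jv_j\in\mathcal A_{s-1}^+P_k$, where $s=\max\{i:\omega_i(u)>0\}$. *)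

theory Defs
  imports Main
begin

(* A monomial of P_k = F_2[x_1,...,x_k] is its exponent function: a n = nu_n(a) for
   1 <= n <= k, and a n = 0 otherwise.  A polynomial over F_2 is the finite set of
   monomials occurring with coefficient 1; addition is symmetric difference. *)
type_synonym mono = "nat \<Rightarrow> nat"
type_synonym poly = "mono set"

definition is_mono :: "nat \<Rightarrow> mono \<Rightarrow> bool" where
  "is_mono k a \<longleftrightarrow> (\<forall>n. (n = 0 \<or> k < n) \<longrightarrow> a n = 0)"

definition mdeg :: "nat \<Rightarrow> mono \<Rightarrow> nat" where
  "mdeg k a = (\<Sum>j=1..k. a j)"

definition padd :: "poly \<Rightarrow> poly \<Rightarrow> poly" where
  "padd f g = (f - g) \<union> (g - f)"

definition psum :: "mono list \<Rightarrow> poly" where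
  "psum vs = foldr (\<lambda>v acc. padd {v} acc) vs {}"

(* Sq^i on a monomial, by Sq^i(x^a) = binom(a,i) x^(a+i) and the Cartan formula *)
definition Sq_mono :: "nat \<Rightarrow> nat \<Rightarrow> mono \<Rightarrow> poly" where
  "Sq_mono k i a = {(\<lambda>n. a n + d n) | d. is_mono k d \<and> (\<Sum>j=1..k. d j) = i
       \<and> (\<forall>j\<in>{1..k}. odd (a j choose d j))}"

(* Sq^i extended additively (over F_2) to polynomials *)
definition Sq :: "nat \<Rightarrow> nat \<Rightarrow> poly \<Rightarrow> poly" where
  "Sq k i f = {b. odd (card {a\<in>f. b \<in> Sq_mono k i a})}"

(* hit k s = A_s^+ P_k : the A_s-submodule of P_k generated by the images of
   Sq^i, 0 < i <= 2^s (A_s is generated by Sq^i, 0 <= i <= 2^s) *)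
inductive_set hit :: "nat \<Rightarrow> nat \<Rightarrow> poly set" for k s where
  hit_zero: "{} \<in> hit k s"
| hit_gen: "finite f \<Longrightarrow> (\<forall>a\<in>f. is_mono k a) \<Longrightarrow> 0 < i \<Longrightarrow> i \<le> 2 ^ s
              \<Longrightarrow> Sq k i f \<in> hit k s"
| hit_Sq: "f \<in> hit k s \<Longrightarrow> i \<le> 2 ^ s \<Longrightarrow> Sq k i f \<in> hit k s"
| hit_add: "f \<in> hit k s \<Longrightarrow> g \<in> hit k s \<Longrightarrow> padd f g \<in> hit k s"

definition alpha :: "nat \<Rightarrow> nat \<Rightarrow> nat" where
  "alpha m a = a div 2 ^ m mod 2"

definition omega :: "nat \<Rightarrow> mono \<Rightarrow> nat \<Rightarrow> nat" where
  "omega k a i = (\<Sum>j=1..k. alpha (i - 1) (a j))"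

definition lex_less :: "(nat \<Rightarrow> nat) \<Rightarrow> (nat \<Rightarrow> nat) \<Rightarrow> bool" where
  "lex_less f g \<longleftrightarrow> (\<exists>m\<ge>1. (\<forall>i. 1 \<le> i \<and> i < m \<longrightarrow> f i = g i) \<and> f m < g m)"

definition sigma_less :: "nat \<Rightarrow> mono \<Rightarrow> mono \<Rightarrow> bool" where
  "sigma_less k a b \<longleftrightarrow> (\<exists>m\<in>{1..k}. (\<forall>j. 1 \<le> j \<and> j < m \<longrightarrow> a j = b j) \<and> a m < b m)"

definition mono_less :: "nat \<Rightarrow> mono \<Rightarrow> mono \<Rightarrow> bool" where
  "mono_less k u v \<longleftrightarrow> lex_less (omega k u) (omega k v)
      \<or> ((\<forall>i\<ge>1. omega k u i = omega k v i) \<and> sigma_less k u v)"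

definition max_s :: "nat \<Rightarrow> mono \<Rightarrow> nat" where
  "max_s k u = Max {i. 1 \<le> i \<and> 0 < omega k u i}"

definition strictly_inadmissible :: "nat \<Rightarrow> mono \<Rightarrow> bool" where
  "strictly_inadmissible k u \<longleftrightarrow>
     (\<exists>vs. (\<forall>v\<in>set vs. is_mono k v \<and> mdeg k v = mdeg k u \<and> mono_less k v u)
        \<and> padd {u} (psum vs) \<in> hit k (max_s k u - 1))"

end

theory Submission
  imports Defs
begin

definition mk :: "nat list \<Rightarrow> mono" where
  "mk es n = (if 0 < n \<and> n \<le> length es then es ! (n - 1) else 0)"

lemma mk5: "mk [a,b,c,d,e] n = (if n=1 then a else if n=2 then b else if n=3 then c
   else if n=4 then d else if n=5 then e else 0)"
  by (cases n; auto simp: mk_def nth_Cons' numeral_eq_Suc)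

lemma len5: "length xs = 5 \<longleftrightarrow> (\<exists>a b c d e. xs = [a,b,c,d,e])"
  by (auto simp: numeral_eq_Suc length_Suc_conv)

lemma sum15: "(\<Sum>j=1..5. f j) = f 1 + f 2 + f 3 + f 4 + f (5::nat)"
proof -
  have "{1..5::nat} = {1,2,3,4,5}" by auto
  then show ?thesis by (simp add: add.assoc)
qed

lemma mk_inj: "length xs = length ys \<Longrightarrow> mk xs = mk ys \<Longrightarrow> xs = ys"
proof (rule nth_equalityI)
  fix k assume "length xs = length ys" "mk xs = mk ys" "k < length xs"
  then have "mk xs (Suc k) = mk ys (Suc k)" by simp
  with \<open>k < length xs\<close> \<open>length xs = length ys\<close> show "xs ! k = ys ! k" by (simp add: mk_def)
qed

fun sqm :: "nat \<Rightarrow> nat list \<Rightarrow> nat list list" where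
  "sqm i [] = (if i = 0 then [[]] else [])"
| "sqm i (e#es) = concat (map (\<lambda>d. if odd (e choose d) then map ((#) (e+d)) (sqm (i-d) es) else []) [0..<Suc i])"

lemma sqm_char: "set (sqm i es) = {map2 (+) es ds | ds. length ds = length es \<and> sum_list ds = i
    \<and> list_all2 (\<lambda>e d. odd (e choose d)) es ds}"
proof (induction es arbitrary: i)
  case Nil
  then show ?case by auto
next
  case (Cons e es)
  show ?case
  proof (rule set_eqI, rule iffI)
    fix x assume "x \<in> set (sqm i (e # es))"
    then obtain d r where d: "d \<le> i" "odd (e choose d)" "r \<in> set (sqm (i-d) es)" "x = (e+d) # r"
      by (auto split: if_splits)
    with Cons obtain ds where "length ds = length es" "sum_list ds = i - d"
       "list_all2 (\<lambda>e d. odd (e choose d)) es ds" "r = map2 (+) es ds" by auto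
    with d show "x \<in> {map2 (+) (e#es) ds | ds. length ds = length (e#es) \<and> sum_list ds = i
    \<and> list_all2 (\<lambda>e d. odd (e choose d)) (e#es) ds}"
    proof -
      have "x = map2 (+) (e#es) (d#ds)" using d \<open>r = map2 (+) es ds\<close> by simp
      moreover have "sum_list (d#ds) = i" using d \<open>sum_list ds = i - d\<close> by simp
      moreover have "length (d#ds) = length (e#es)" using \<open>length ds = length es\<close> by simp
      moreover have "list_all2 (\<lambda>e d. odd (e choose d)) (e#es) (d#ds)"
        using d(2) \<open>list_all2 (\<lambda>e d. odd (e choose d)) es ds\<close> by simp
      ultimately show ?thesis by blast
    qed
  next
    fix x assume "x \<in> {map2 (+) (e#es) ds | ds. length ds = length (e#es) \<and> sum_list ds = i
    \<and> list_all2 (\<lambda>e d. odd (e choose d)) (e#es) ds}"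
    then obtain d ds where h: "length ds = length es" "d + sum_list ds = i"
       "odd (e choose d)" "list_all2 (\<lambda>e d. odd (e choose d)) es ds" "x = (e+d) # map2 (+) es ds"
      by (auto simp: length_Suc_conv)
    then have "map2 (+) es ds \<in> set (sqm (i-d) es)" using Cons by auto
    show "x \<in> set (sqm i (e # es))"
    proof -
      let ?F = "\<lambda>d. if odd (e choose d) then map ((#) (e+d)) (sqm (i-d) es) else []"
      have "x \<in> set (?F d)" using h \<open>map2 (+) es ds \<in> set (sqm (i-d) es)\<close> by simp
      moreover have "d \<in> set [0..<Suc i]" using h(2) by (simp only: set_upt atLeastLessThan_iff) linarith
      ultimately have "x \<in> set (concat (map ?F [0..<Suc i]))"
        unfolding set_concat set_map by blast
      then show ?thesis by (simp only: sqm.simps)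
    qed
  qed
qed

lemma cases5: obtains "n = 0" | "n = 1" | "n = 2" | "n = 3" | "n = 4" | "n = (5::nat)" | "5 < n"
  by linarith

lemma Sq_mono_mk:
  assumes "length es = 5"
  shows "Sq_mono 5 i (mk es) = mk ` set (sqm i es)"
proof -
  obtain a b c d e where es: "es = [a,b,c,d,e]" using assms by (auto simp: len5)
  show ?thesis
  proof (rule set_eqI, rule iffI)
    fix x assume "x \<in> Sq_mono 5 i (mk es)"
    then obtain dd where x: "x = (\<lambda>n. mk es n + dd n)" and dd: "is_mono 5 dd" "(\<Sum>j=1..5. dd j) = i"
      "\<forall>j\<in>{1..5}. odd (mk es j choose dd j)"
      unfolding Sq_mono_def by blast
    define ds where "ds = [dd 1, dd 2, dd 3, dd 4, dd 5]"
    have "x = mk (map2 (+) es ds)"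
    proof
      fix n show "x n = mk (map2 (+) es ds) n"
        using dd(1) by (cases n rule: cases5) (auto simp: x es ds_def mk5 is_mono_def)
    qed
    moreover have "sum_list ds = i" using dd(2) unfolding sum15 by (simp add: ds_def add.assoc)
    moreover have "list_all2 (\<lambda>e d. odd (e choose d)) es ds"
      using dd(3)[rule_format, of 1] dd(3)[rule_format, of 2] dd(3)[rule_format, of 3]
        dd(3)[rule_format, of 4] dd(3)[rule_format, of 5] by (simp add: es ds_def mk5)
    moreover have "length ds = length es" by (simp add: es ds_def)
    ultimately show "x \<in> mk ` set (sqm i es)" unfolding sqm_char by blast
  next
    fix x assume "x \<in> mk ` set (sqm i es)"
    then obtain ds where x: "x = mk (map2 (+) es ds)" and ds: "length ds = length es" "sum_list ds = i"
      "list_all2 (\<lambda>e d. odd (e choose d)) es ds" unfolding sqm_char by blast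
    have "length ds = 5" using ds(1) es by simp
    then obtain p q r s w where dse: "ds = [p,q,r,s,w]" unfolding len5 by blast
    have "x = (\<lambda>n. mk es n + mk ds n)"
    proof
      fix n show "x n = mk es n + mk ds n"
        by (cases n rule: cases5) (auto simp: x es dse mk5)
    qed
    moreover have "is_mono 5 (mk ds)" by (auto simp: is_mono_def dse mk5)
    moreover have "(\<Sum>j=1..5. mk ds j) = i" using ds(2) unfolding sum15 by (simp add: dse mk5 add.assoc)
    moreover have "\<forall>j\<in>{1..5}. odd (mk es j choose mk ds j)"
      using ds(3) by (auto simp: es dse mk5)
    ultimately show "x \<in> Sq_mono 5 i (mk es)" unfolding Sq_mono_def by blast
  qed
qed

lemma Sq_single: "Sq k i {a} = Sq_mono k i a"
proof -
  have "\<And>b. {a'\<in>{a}. b \<in> Sq_mono k i a'} = (if b \<in> Sq_mono k i a then {a} else {})" by auto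
  then show ?thesis unfolding Sq_def by auto
qed

definition xorl :: "'a list \<Rightarrow> 'a list \<Rightarrow> 'a list" where
  "xorl xs ys = filter (\<lambda>x. x \<notin> set ys) xs @ filter (\<lambda>y. y \<notin> set xs) ys"

lemma set_xorl: "set (xorl xs ys) = (set xs - set ys) \<union> (set ys - set xs)"
  by (auto simp: xorl_def)

definition total :: "(nat \<times> nat list) list \<Rightarrow> nat list list" where
  "total gens = foldr (\<lambda>(i,w) acc. xorl (sqm i w) acc) gens []"

lemma total_Cons: "total ((i,w)#g) = xorl (sqm i w) (total g)"
  by (simp add: total_def)

lemma total_Nil: "total [] = []"
  by (simp add: total_def)

lemma sqm_len: "x \<in> set (sqm i w) \<Longrightarrow> length x = length w"
  unfolding sqm_char by auto

lemma total_len: "list_all (\<lambda>(i,w). length w = 5) gens \<Longrightarrow> x \<in> set (total gens) \<Longrightarrow> length x = 5"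
proof (induction gens)
  case Nil then show ?case by (simp add: total_Nil)
next
  case (Cons g gens)
  obtain i w where g: "g = (i,w)" by (cases g)
  from Cons show ?case by (auto simp: g total_Cons set_xorl dest: sqm_len)
qed


definition L5 :: "nat list set" where "L5 = {xs. length xs = 5}"

lemma inj_mk: "inj_on mk L5"
  by (rule inj_onI) (auto simp: L5_def intro: mk_inj)

lemma padd_mk:
  assumes "A \<subseteq> L5" "B \<subseteq> L5"
  shows "padd (mk ` A) (mk ` B) = mk ` ((A - B) \<union> (B - A))"
proof -
  have "mk ` (A - B) = mk ` A - mk ` B"
    by (rule inj_on_image_set_diff[OF inj_mk]) (use assms in auto)
  moreover have "mk ` (B - A) = mk ` B - mk ` A"
    by (rule inj_on_image_set_diff[OF inj_mk]) (use assms in auto)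
  ultimately show ?thesis unfolding padd_def by (simp add: image_Un)
qed


lemma mk_is_mono: "length w = 5 \<Longrightarrow> is_mono 5 (mk w)"
  by (auto simp: is_mono_def mk_def)

lemma total_hit:
  "list_all (\<lambda>(i,w). length w = 5 \<and> 0 < i \<and> i \<le> 2 ^ s) gens \<Longrightarrow> mk ` set (total gens) \<in> hit 5 s"
proof (induction gens)
  case Nil then show ?case by (simp add: total_Nil hit.hit_zero)
next
  case (Cons g gens)
  obtain i w where g: "g = (i,w)" by (cases g)
  have w: "length w = 5" "0 < i" "i \<le> 2 ^ s" using Cons.prems g by auto
  have IH: "mk ` set (total gens) \<in> hit 5 s" using Cons.IH Cons.prems by simp
  have A: "set (sqm i w) \<subseteq> L5" using w(1) unfolding L5_def by (auto dest: sqm_len)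
  have lg: "list_all (\<lambda>(i,w). length w = 5) gens" using Cons.prems
    by (fastforce simp: list_all_iff)
  have B: "set (total gens) \<subseteq> L5" using total_len[OF lg] unfolding L5_def by blast
  have "mk ` set (total (g#gens)) = padd (mk ` set (sqm i w)) (mk ` set (total gens))"
    unfolding g total_Cons set_xorl by (rule padd_mk[OF A B, symmetric])
  also have "\<dots> = padd (Sq 5 i {mk w}) (mk ` set (total gens))"
    by (simp only: Sq_single Sq_mono_mk[OF w(1)])
  also have "\<dots> \<in> hit 5 s"
    by (rule hit.hit_add[OF hit.hit_gen IH]) (simp_all add: w mk_is_mono)
  finally show ?case .
qed


lemma psum_Cons: "psum (v#vs) = padd {v} (psum vs)"
  by (simp add: psum_def)

lemma psum_distinct: "distinct vs \<Longrightarrow> psum vs = set vs"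
proof (induction vs)
  case Nil then show ?case by (simp add: psum_def)
next
  case (Cons v vs)
  then have "psum vs = set vs" "v \<notin> set vs" by auto
  then show ?case unfolding psum_Cons padd_def by auto
qed

definition om :: "nat list \<Rightarrow> nat \<Rightarrow> nat" where
  "om v i = sum_list (map (alpha (i - 1)) v)"

definition lexc :: "nat list \<Rightarrow> nat list \<Rightarrow> bool" where
  "lexc v u = (\<exists>m\<in>set [1..<6]. (\<forall>i\<in>set [1..<m]. om v i = om u i) \<and> om v m < om u m)"

definition eqom :: "nat list \<Rightarrow> nat list \<Rightarrow> bool" where
  "eqom v u = (\<forall>i\<in>set [1..<6]. om v i = om u i)"

definition sigc :: "nat list \<Rightarrow> nat list \<Rightarrow> bool" where
  "sigc v u = (\<exists>m\<in>set [1..<6]. (\<forall>j\<in>set [1..<m]. v!(j-1) = u!(j-1)) \<and> v!(m-1) < u!(m-1))"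

definition small :: "nat list \<Rightarrow> bool" where
  "small v = list_all (\<lambda>x. x < 32) v"

definition lessc :: "nat list \<Rightarrow> nat list \<Rightarrow> bool" where
  "lessc v u = (lexc v u \<or> (eqom v u \<and> sigc v u))"

definition maxc :: "nat \<Rightarrow> nat list \<Rightarrow> bool" where
  "maxc s u = (0 < om u (Suc s) \<and> (\<forall>i\<in>set [Suc (Suc s)..<6]. om u i = 0))"

definition vsof :: "nat list \<Rightarrow> (nat \<times> nat list) list \<Rightarrow> nat list list" where
  "vsof u gens = filter (\<lambda>x. x \<noteq> u) (remdups (total gens))"

definition check :: "nat \<Rightarrow> nat list \<Rightarrow> (nat \<times> nat list) list \<Rightarrow> bool" where
  "check s u gens = (length u = 5 \<and> small u \<and> Suc s < 6 \<and> maxc s u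
     \<and> list_all (\<lambda>(i,w). length w = 5 \<and> 0 < i \<and> i \<le> 2 ^ s) gens
     \<and> u \<in> set (total gens)
     \<and> list_all (\<lambda>v. length v = 5 \<and> small v \<and> sum_list v = sum_list u \<and> lessc v u) (vsof u gens))"

lemma omega_mk: "length v = 5 \<Longrightarrow> omega 5 (mk v) i = om v i"
proof -
  assume "length v = 5"
  then obtain a b c d e where v: "v = [a,b,c,d,e]" unfolding len5 by blast
  show ?thesis unfolding omega_def sum15 by (simp add: v om_def mk5 add.assoc)
qed

lemma mdeg_mk: "length v = 5 \<Longrightarrow> mdeg 5 (mk v) = sum_list v"
proof -
  assume "length v = 5"
  then obtain a b c d e where v: "v = [a,b,c,d,e]" unfolding len5 by blast
  show ?thesis unfolding mdeg_def sum15 by (simp add: v mk5 add.assoc)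
qed

lemma alpha_big: "x < 32 \<Longrightarrow> 6 \<le> i \<Longrightarrow> alpha (i - 1) x = 0"
proof -
  assume a: "x < 32" "6 \<le> i"
  then have "(2::nat) ^ 5 \<le> 2 ^ (i - 1)" by (intro power_increasing) auto
  then have "x < 2 ^ (i - 1)" using a(1) by simp
  then have "x div 2 ^ (i - 1) = 0" by (rule div_less)
  then show ?thesis unfolding alpha_def by simp
qed

lemma om_big: "small v \<Longrightarrow> 6 \<le> i \<Longrightarrow> om v i = 0"
proof (induction v)
  case Nil then show ?case by (simp add: om_def)
next
  case (Cons x v)
  then have "x < 32" "small v" by (simp_all add: small_def)
  then have "alpha (i - 1) x = 0" "om v i = 0" using Cons alpha_big by auto
  then show ?case by (simp add: om_def)
qed

lemma mk_nth: "length v = 5 \<Longrightarrow> 1 \<le> j \<Longrightarrow> j \<le> 5 \<Longrightarrow> mk v j = v ! (j - 1)"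
  by (simp add: mk_def)

lemma lessc_sound:
  assumes lv: "length v = 5" and lu: "length u = 5" and sv: "small v" and su: "small u"
    and c: "lessc v u"
  shows "mono_less 5 (mk v) (mk u)"
proof -
  have om: "\<And>i. omega 5 (mk v) i = om v i" "\<And>i. omega 5 (mk u) i = om u i"
    using omega_mk lv lu by auto
  show ?thesis
  proof (cases "lexc v u")
    case True
    then obtain m where m: "m \<in> set [1..<6]" "\<forall>i\<in>set [1..<m]. om v i = om u i" "om v m < om u m"
      unfolding lexc_def by blast
    have "lex_less (omega 5 (mk v)) (omega 5 (mk u))"
      unfolding lex_less_def om
    proof (intro exI[of _ m] conjI allI impI)
      show "1 \<le> m" using m(1) by simp
      show "om v m < om u m" by (rule m(3))
    next
      fix i assume "1 \<le> i \<and> i < m"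
      then show "om v i = om u i" using m(2) by simp
    qed
    then show ?thesis unfolding mono_less_def by blast
  next
    case False
    with c have e: "eqom v u" and sg: "sigc v u" unfolding lessc_def by auto
    have A: "\<forall>i\<ge>1. omega 5 (mk v) i = omega 5 (mk u) i"
    proof (intro allI impI)
      fix i :: nat assume "1 \<le> i"
      show "omega 5 (mk v) i = omega 5 (mk u) i"
      proof (cases "i < 6")
        case True then show ?thesis using e \<open>1 \<le> i\<close> unfolding om eqom_def by simp
      next
        case False then show ?thesis unfolding om using om_big sv su by simp
      qed
    qed
    from sg obtain m where m: "m \<in> set [1..<6]" "\<forall>j\<in>set [1..<m]. v!(j-1) = u!(j-1)"
      "v!(m-1) < u!(m-1)" unfolding sigc_def by blast
    have "sigma_less 5 (mk v) (mk u)"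
      unfolding sigma_less_def
    proof (intro bexI[of _ m] conjI allI impI)
      show "m \<in> {1..5}" using m(1) by auto
      show "mk v m < mk u m" using m(1,3) lv lu by (simp add: mk_nth)
    next
      fix j assume "1 \<le> j \<and> j < m"
      then show "mk v j = mk u j" using m(1,2) lv lu by (simp add: mk_nth)
    qed
    with A show ?thesis unfolding mono_less_def by blast
  qed
qed

lemma maxs_sound:
  assumes lu: "length u = 5" and su: "small u" and s6: "Suc s < 6" and c: "maxc s u"
  shows "max_s 5 (mk u) = Suc s"
proof -
  let ?S = "{i. 1 \<le> i \<and> 0 < omega 5 (mk u) i}"
  have om: "\<And>i. omega 5 (mk u) i = om u i" using omega_mk lu by auto
  have sub: "?S \<subseteq> {1..5}"
  proof
    fix i assume "i \<in> ?S"
    then have "1 \<le> i" "0 < om u i" by (auto simp: om)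
    moreover have "\<not> 6 \<le> i" using om_big[OF su] \<open>0 < om u i\<close> by force
    ultimately show "i \<in> {1..5}" by auto
  qed
  have fin: "finite ?S" using finite_subset[OF sub] by simp
  have mem: "Suc s \<in> ?S" using c unfolding maxc_def by (simp add: om)
  have le: "\<forall>i\<in>?S. i \<le> Suc s"
  proof
    fix i assume i: "i \<in> ?S"
    show "i \<le> Suc s"
    proof (rule ccontr)
      assume "\<not> i \<le> Suc s"
      moreover have "i \<le> 5" using sub i by auto
      ultimately have "i \<in> set [Suc (Suc s)..<6]" by auto
      then have "om u i = 0" using c unfolding maxc_def by blast
      then show False using i by (simp add: om)
    qed
  qed
  show ?thesis unfolding max_s_def by (rule Max_eqI[OF fin]) (use le mem in auto)
qed

lemma sound:
  assumes "check s u gens"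
  shows "strictly_inadmissible 5 (mk u)"
proof -
  have lu: "length u = 5" and su: "small u" and s6: "Suc s < 6" and mc: "maxc s u"
   and gl: "list_all (\<lambda>(i,w). length w = 5 \<and> 0 < i \<and> i \<le> 2 ^ s) gens"
   and ut: "u \<in> set (total gens)"
   and vl: "list_all (\<lambda>v. length v = 5 \<and> small v \<and> sum_list v = sum_list u \<and> lessc v u) (vsof u gens)"
    using assms unfolding check_def by auto
  have ms: "max_s 5 (mk u) - 1 = s" using maxs_sound[OF lu su s6 mc] by simp
  have lg: "list_all (\<lambda>(i,w). length w = 5) gens" using gl by (fastforce simp: list_all_iff)
  have T5: "set (total gens) \<subseteq> L5" using total_len[OF lg] unfolding L5_def by blast
  have sv: "set (vsof u gens) = set (total gens) - {u}" by (auto simp: vsof_def)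
  have dv: "distinct (vsof u gens)" by (simp add: vsof_def)
  have V5: "set (vsof u gens) \<subseteq> L5" using sv T5 by auto
  have dm: "distinct (map mk (vsof u gens))"
    using dv V5 inj_mk by (simp add: distinct_map inj_on_subset)
  have "padd {mk u} (psum (map mk (vsof u gens))) = padd (mk ` {u}) (mk ` set (vsof u gens))"
    using psum_distinct[OF dm] by simp
  also have "\<dots> = mk ` (({u} - set (vsof u gens)) \<union> (set (vsof u gens) - {u}))"
    by (rule padd_mk) (use lu V5 in \<open>auto simp: L5_def\<close>)
  also have "({u} - set (vsof u gens)) \<union> (set (vsof u gens) - {u}) = set (total gens)"
    using sv ut by auto
  finally have eq: "padd {mk u} (psum (map mk (vsof u gens))) = mk ` set (total gens)" .
  have hit: "padd {mk u} (psum (map mk (vsof u gens))) \<in> hit 5 (max_s 5 (mk u) - 1)"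
    unfolding eq ms by (rule total_hit[OF gl])
  have "\<forall>v\<in>set (map mk (vsof u gens)). is_mono 5 v \<and> mdeg 5 v = mdeg 5 (mk u) \<and> mono_less 5 v (mk u)"
  proof
    fix x assume "x \<in> set (map mk (vsof u gens))"
    then obtain v where v: "v \<in> set (vsof u gens)" "x = mk v" by auto
    then have "length v = 5" "small v" "sum_list v = sum_list u" "lessc v u"
      using vl by (auto simp: list_all_iff)
    then show "is_mono 5 x \<and> mdeg 5 x = mdeg 5 (mk u) \<and> mono_less 5 x (mk u)"
      using v(2) lu su mk_is_mono mdeg_mk lessc_sound by simp
  qed
  with hit show ?thesis unfolding strictly_inadmissible_def by blast
qed

lemma c1_12: "check 1 [2,1,3,3,3] [(1,[1,1,3,3,3])]"
  by code_simp

lemma c1_13: "check 1 [2,3,1,3,3] [(1,[1,3,1,3,3])]"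
  by code_simp

lemma c1_14: "check 1 [2,3,3,1,3] [(1,[1,3,3,1,3])]"
  by code_simp

lemma c1_15: "check 1 [2,3,3,3,1] [(1,[1,3,3,3,1])]"
  by code_simp

lemma c1_23: "check 1 [3,2,1,3,3] [(1,[3,1,1,3,3])]"
  by code_simp

lemma c1_24: "check 1 [3,2,3,1,3] [(1,[3,1,3,1,3])]"
  by code_simp

lemma c1_25: "check 1 [3,2,3,3,1] [(1,[3,1,3,3,1])]"
  by code_simp

lemma c1_34: "check 1 [3,3,2,1,3] [(1,[3,3,1,1,3])]"
  by code_simp

lemma c1_35: "check 1 [3,3,2,3,1] [(1,[3,3,1,3,1])]"
  by code_simp

lemma c1_45: "check 1 [3,3,3,2,1] [(1,[3,3,3,1,1])]"
  by code_simp

lemma c2_123: "check 2 [3,4,3,7,7] [(1,[3,3,3,7,7]),(2,[2,3,3,7,7])]"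
  by code_simp

lemma c2_124: "check 2 [3,4,7,3,7] [(1,[3,3,7,3,7]),(2,[2,3,7,3,7])]"
  by code_simp

lemma c2_125: "check 2 [3,4,7,7,3] [(1,[3,3,7,7,3]),(2,[2,3,7,7,3])]"
  by code_simp

lemma c2_134: "check 2 [3,7,4,3,7] [(1,[3,7,3,3,7]),(2,[2,7,3,3,7])]"
  by code_simp

lemma c2_135: "check 2 [3,7,4,7,3] [(1,[3,7,3,7,3]),(2,[2,7,3,7,3])]"
  by code_simp

lemma c2_145: "check 2 [3,7,7,4,3] [(1,[3,7,7,3,3]),(2,[2,7,7,3,3])]"
  by code_simp

lemma c2_234: "check 2 [7,3,4,3,7] [(1,[7,3,3,3,7]),(2,[7,2,3,3,7])]"
  by code_simp

lemma c2_235: "check 2 [7,3,4,7,3] [(1,[7,3,3,7,3]),(2,[7,2,3,7,3])]"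
  by code_simp

lemma c2_245: "check 2 [7,3,7,4,3] [(1,[7,3,7,3,3]),(2,[7,2,7,3,3])]"
  by code_simp

lemma c2_345: "check 2 [7,7,3,4,3] [(1,[7,7,3,3,3]),(2,[7,7,2,3,3])]"
  by code_simp

lemma upt16: "[1..<6] = [1,2,3,4,5::nat]" by (simp add: upt_rec)

lemma case1_all: "\<forall>i\<in>set [1..<6]. \<forall>j\<in>set [1..<6]. i < j \<longrightarrow>
   check 1 (map (\<lambda>n. if n = i then 2 else if n = j then 1 else 3) [1..<6])
     [(1, map (\<lambda>n. if n = i then 1 else if n = j then 1 else 3) [1..<6])]"
  unfolding upt16 using c1_12 c1_13 c1_14 c1_15 c1_23 c1_24 c1_25 c1_34 c1_35 c1_45 by simp

lemma case2_all: "\<forall>i\<in>set [1..<6]. \<forall>j\<in>set [1..<6]. \<forall>t\<in>set [1..<6]. i < j \<and> j < t \<longrightarrow>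
   check 2 (map (\<lambda>n. if n = i then 3 else if n = j then 4 else if n = t then 3 else 7) [1..<6])
     [(1, map (\<lambda>n. if n = i then 3 else if n = j then 3 else if n = t then 3 else 7) [1..<6]),
      (2, map (\<lambda>n. if n = i then 2 else if n = j then 3 else if n = t then 3 else 7) [1..<6])]"
  unfolding upt16 using c2_123 c2_124 c2_125 c2_134 c2_135 c2_145 c2_234 c2_235 c2_245 c2_345 by simp

lemma mk_map: "mk (map g [1..<6]) n = (if 1 \<le> n \<and> n \<le> 5 then g n else 0)"
  by (auto simp: mk_def)

theorem lemma3p7:
  fixes i j t u v :: nat
  assumes "{i, j, t, u, v} = {1, 2, 3, 4, 5}"
  shows "(i < j \<longrightarrow> strictly_inadmissible 5
            (\<lambda>n. if n = i then 2 else if n = j then 1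
                  else if n = t \<or> n = u \<or> n = v then 3 else 0))
       \<and> (i < j \<and> j < t \<longrightarrow> strictly_inadmissible 5
            (\<lambda>n. if n = i then 3 else if n = j then 4 else if n = t then 3
                  else if n = u \<or> n = v then 7 else 0))"
proof -
  have mem: "\<And>n. (n = i \<or> n = j \<or> n = t \<or> n = u \<or> n = v) \<longleftrightarrow> 1 \<le> n \<and> n \<le> 5"
  proof -
    fix n
    have "(n = i \<or> n = j \<or> n = t \<or> n = u \<or> n = v) \<longleftrightarrow> n \<in> {i, j, t, u, v}" by simp
    also have "\<dots> \<longleftrightarrow> n \<in> {1, 2, 3, 4, 5}" using assms by simp
    also have "\<dots> \<longleftrightarrow> 1 \<le> n \<and> n \<le> 5" by auto
    finally show "(n = i \<or> n = j \<or> n = t \<or> n = u \<or> n = v) \<longleftrightarrow> 1 \<le> n \<and> n \<le> 5" .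
  qed
  have ij: "i \<in> set [1..<6]" "j \<in> set [1..<6]" "t \<in> set [1..<6]" using mem[of i] mem[of j] mem[of t] by auto
  show ?thesis
  proof (intro conjI impI)
    assume "i < j"
    have "(\<lambda>n. if n = i then 2 else if n = j then 1
                  else if n = t \<or> n = u \<or> n = v then 3 else 0)
        = mk (map (\<lambda>n. if n = i then 2 else if n = j then 1 else 3) [1..<6])"
    proof
      fix n show "(if n = i then 2 else if n = j then 1 else if n = t \<or> n = u \<or> n = v then 3 else 0)
          = mk (map (\<lambda>n. if n = i then 2 else if n = j then 1 else 3) [1..<6]) n"
        unfolding mk_map using mem[of n] by auto
    qed
    then show "strictly_inadmissible 5
            (\<lambda>n. if n = i then 2 else if n = j then 1
                  else if n = t \<or> n = u \<or> n = v then 3 else 0)"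
      using sound[OF case1_all[rule_format, OF ij(1) ij(2) \<open>i < j\<close>]] by simp
  next
    assume h: "i < j \<and> j < t"
    have "(\<lambda>n. if n = i then 3 else if n = j then 4 else if n = t then 3
                  else if n = u \<or> n = v then 7 else 0)
        = mk (map (\<lambda>n. if n = i then 3 else if n = j then 4 else if n = t then 3 else 7) [1..<6])"
    proof
      fix n show "(if n = i then 3 else if n = j then 4 else if n = t then 3
                  else if n = u \<or> n = v then 7 else 0)
          = mk (map (\<lambda>n. if n = i then 3 else if n = j then 4 else if n = t then 3 else 7) [1..<6]) n"
        unfolding mk_map using mem[of n] by auto
    qed
    then show "strictly_inadmissible 5
            (\<lambda>n. if n = i then 3 else if n = j then 4 else if n = t then 3
                  else if n = u \<or> n = v then 7 else 0)"
      using sound[OF case2_all[rule_format, OF ij(1) ij(2) ij(3) h]] by simp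
  qed
qed

end
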